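(* Let $(\Omega,\mathcal{F},\mu)$ be a probability space, $\mathcal{F}^*_1\supseteq\mathcal{F}^*_2\supseteq\dots\supseteq\mathcal{F}^*_n\supseteq\mathcal{F}^*_{n+1}$ sub-$\sigma$-algebras of $\mathcal{F}$, and $\varphi_1,\dots,\varphi_n$ integrable functions with $\varphi_k$ being $\mathcal{F}^*_k$-measurable. Define $\lambda_0=0$ and $\lambda_k=\mathbb{E}^*_{k+1}\big(|\varphi_k|^2+\lambda_{k-1}^2\big)^{1/2}$ for $k=1,\dots,n$. Then \[\inf\Big\{\mathbb{E}\Big(\sum_{k=1}^n|f_k|^2\Big)^{1/2}: f_k\in L^1(\Omega),\ \mathbb{E}^*_kf_k=\varphi_k\ (k=1,\dots,n)\Big\}=\mathbb{E}\lambda_n.\]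
   Context: $\mathbb{E}^*_k$ denotes conditional expectation with respect to $\mathcal{F}^*_k$. (The value $\mathbb{E}\lambda_n$ does not depend on the choice of $\mathcal{F}^*_{n+1}$.) *)

theory Defs
  imports "HOL-Probability.Probability"
begin

text \<open>The functions lambda_k of the paper: lambda_0 = 0 and
  lambda_k = E(sqrt(phi_k^2 + lambda_(k-1)^2) | F_(k+1)), k = 1..n.
  Here F and phi are indexed by natural numbers starting at 1.\<close>
primrec cond_lambda ::
  "'a measure \<Rightarrow> (nat \<Rightarrow> 'a measure) \<Rightarrow> (nat \<Rightarrow> 'a \<Rightarrow> real) \<Rightarrow> nat \<Rightarrow> 'a \<Rightarrow> real" where
  "cond_lambda M F \<phi> 0 = (\<lambda>x. 0)"
| "cond_lambda M F \<phi> (Suc k) =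
     real_cond_exp M (F (Suc (Suc k)))
       (\<lambda>x. sqrt ((\<phi> (Suc k) x)\<^sup>2 + (cond_lambda M F \<phi> k x)\<^sup>2))"

end

theory Submission
  imports Defs
begin

context sigma_finite_subalgebra
begin

lemma ennreal_cond_exp_nonneg:
  assumes "integrable M h" "\<And>x. h x \<ge> 0"
  shows "AE x in M. ennreal (real_cond_exp M F h x) = nn_cond_exp M F (\<lambda>x. ennreal (h x)) x"
proof -
  have hm[measurable]: "h \<in> borel_measurable M" using assms(1) by auto
  have z: "(\<lambda>x. ennreal (- h x)) = (\<lambda>x. 0)" using assms(2) by (auto intro: ext simp: ennreal_eq_0_iff)
  have "AE x in M. (\<lambda>x. 0::ennreal) x = nn_cond_exp M F (\<lambda>x. 0) x"
    by (rule nn_cond_exp_F_meas) simp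
  then have A0: "AE x in M. nn_cond_exp M F (\<lambda>x. ennreal (- h x)) x = 0" unfolding z by auto
  have "(\<integral>\<^sup>+ x. (\<lambda>x. 1) x * nn_cond_exp M F (\<lambda>x. ennreal (h x)) x \<partial>M) = (\<integral>\<^sup>+ x. (\<lambda>x. 1) x * ennreal (h x) \<partial>M)"
    by (rule nn_cond_exp_intg) auto
  then have "(\<integral>\<^sup>+ x. nn_cond_exp M F (\<lambda>x. ennreal (h x)) x \<partial>M) = (\<integral>\<^sup>+ x. ennreal (h x) \<partial>M)" by simp
  also have "\<dots> = ennreal (integral\<^sup>L M h)"
    using assms by (intro nn_integral_eq_integral) auto
  finally have "(\<integral>\<^sup>+ x. nn_cond_exp M F (\<lambda>x. ennreal (h x)) x \<partial>M) \<noteq> \<infinity>" by simp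
  then have Afin: "AE x in M. nn_cond_exp M F (\<lambda>x. ennreal (h x)) x \<noteq> \<infinity>"
    by (intro nn_integral_PInf_AE) auto
  show ?thesis using A0 Afin
    by eventually_elim (auto simp: real_cond_exp_def top.not_eq_extremum)
qed

lemma nn_integral_cond_exp_nonneg:
  assumes "integrable M h" "\<And>x. h x \<ge> 0" "\<And>x. a x \<ge> 0" and [measurable]: "a \<in> borel_measurable F"
  shows "(\<integral>\<^sup>+ x. ennreal (a x * h x) \<partial>M) = (\<integral>\<^sup>+ x. ennreal (a x * real_cond_exp M F h x) \<partial>M)"
proof -
  have hm[measurable]: "h \<in> borel_measurable M" using assms(1) by auto
  have "(\<integral>\<^sup>+ x. ennreal (a x * h x) \<partial>M) = (\<integral>\<^sup>+ x. ennreal (a x) * ennreal (h x) \<partial>M)"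
    using assms by (simp add: ennreal_mult)
  also have "\<dots> = (\<integral>\<^sup>+ x. ennreal (a x) * nn_cond_exp M F (\<lambda>x. ennreal (h x)) x \<partial>M)"
    by (rule nn_cond_exp_intg[symmetric]) auto
  also have "\<dots> = (\<integral>\<^sup>+ x. ennreal (a x) * ennreal (real_cond_exp M F h x) \<partial>M)"
    using ennreal_cond_exp_nonneg[OF assms(1,2)] by (intro nn_integral_cong_AE) auto
  also have "\<dots> = (\<integral>\<^sup>+ x. ennreal (a x * real_cond_exp M F h x) \<partial>M)"
  proof -
    have "AE x in M. real_cond_exp M F h x \<ge> 0"
      using assms(2) by (intro real_cond_exp_pos) auto
    then show ?thesis using assms(3) by (intro nn_integral_cong_AE) (auto simp: ennreal_mult)
  qed
  finally show ?thesis .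
qed

lemma integrable_from_cond_exp_nonneg:
  assumes "integrable M h" "\<And>x. h x \<ge> 0" "\<And>x. a x \<ge> 0" and [measurable]: "a \<in> borel_measurable F"
    and "integrable M (\<lambda>x. a x * real_cond_exp M F h x)"
  shows "integrable M (\<lambda>x. a x * h x)"
proof -
  have hm[measurable]: "h \<in> borel_measurable M" using assms(1) by auto
  have am[measurable]: "a \<in> borel_measurable M" using measurable_from_subalg[OF subalg assms(4)] by auto
  have "(\<integral>\<^sup>+ x. ennreal (norm (a x * real_cond_exp M F h x)) \<partial>M) < \<infinity>"
    using assms(5) unfolding integrable_iff_bounded by auto
  moreover have "AE x in M. real_cond_exp M F h x \<ge> 0"
    using assms(2) by (intro real_cond_exp_pos) auto
  then have "(\<integral>\<^sup>+ x. ennreal (norm (a x * real_cond_exp M F h x)) \<partial>M) = (\<integral>\<^sup>+ x. ennreal (a x * real_cond_exp M F h x) \<partial>M)"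
    using assms(3) by (intro nn_integral_cong_AE) auto
  ultimately have "(\<integral>\<^sup>+ x. ennreal (norm (a x * h x)) \<partial>M) < \<infinity>"
    using nn_integral_cond_exp_nonneg[OF assms(1-4)] assms(2,3) by simp
  then show ?thesis unfolding integrable_iff_bounded by auto
qed

end


lemma cs_aux: fixes a b c d :: real assumes "c^2 + d^2 \<le> 1" shows "c*a + d*b \<le> sqrt(a^2+b^2)"
proof -
  have "(c*a+d*b)^2 \<le> (c^2+d^2)*(a^2+b^2)"
    proof -
    have "0 \<le> (c*b - d*a)^2" by simp
    then show ?thesis by (simp add: algebra_simps power2_eq_square)
  qed
  also have "\<dots> \<le> a^2+b^2" using assms by (simp add: mult_left_le_one_le)
  finally show ?thesis by (rule real_le_rsqrt)
qed
lemma unit_aux: fixes u v :: real shows "(u / sqrt(u^2+v^2))^2 + (v / sqrt(u^2+v^2))^2 \<le> 1"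
  and "u / sqrt(u^2+v^2) * u + v / sqrt(u^2+v^2) * v = sqrt(u^2+v^2)"
  and "\<bar>u / sqrt(u^2+v^2)\<bar> \<le> 1" and "\<bar>v / sqrt(u^2+v^2)\<bar> \<le> 1"
proof -
  show "(u / sqrt(u^2+v^2))^2 + (v / sqrt(u^2+v^2))^2 \<le> 1"
  proof (cases "u^2+v^2 = 0")
    case False
    have "(u / sqrt(u^2+v^2))^2 + (v / sqrt(u^2+v^2))^2 = (u^2+v^2) / (sqrt(u^2+v^2))^2"
      by (simp only: power_divide add_divide_distrib)
    also have "\<dots> = 1" using False by simp
    finally show ?thesis by simp
  qed simp
  show "u / sqrt(u^2+v^2) * u + v / sqrt(u^2+v^2) * v = sqrt(u^2+v^2)"
  proof (cases "u^2+v^2 = 0")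
    case False
    then have "sqrt(u^2+v^2) > 0" using sum_power2_ge_zero by (metis add_nonneg_nonneg real_sqrt_gt_0_iff zero_le_power2 order_neq_le_trans)
    have "u / sqrt(u^2+v^2) * u + v / sqrt(u^2+v^2) * v = (u^2+v^2) / sqrt(u^2+v^2)"
      by (simp add: power2_eq_square add_divide_distrib)
    then show ?thesis by (simp add: real_div_sqrt)
  qed simp
  have ab: "\<bar>x\<bar> \<le> s \<Longrightarrow> \<bar>x / s\<bar> \<le> 1" for x s :: real
    by (cases "s = 0") (auto simp: abs_divide divide_le_eq_1)
  have "\<bar>u\<bar> \<le> sqrt(u^2+v^2)" using real_sqrt_le_mono[of "u^2" "u^2+v^2"] by simp
  then show "\<bar>u / sqrt(u^2+v^2)\<bar> \<le> 1" by (rule ab)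
  have "\<bar>v\<bar> \<le> sqrt(u^2+v^2)" using real_sqrt_le_mono[of "v^2" "u^2+v^2"] by simp
  then show "\<bar>v / sqrt(u^2+v^2)\<bar> \<le> 1" by (rule ab)
qed

locale L13 =
  fixes M :: "'a measure" and F :: "nat \<Rightarrow> 'a measure"
    and \<phi> :: "nat \<Rightarrow> 'a \<Rightarrow> real" and n :: nat
  assumes prob: "prob_space M"
    and sub: "\<And>k. k \<in> {1..Suc n} \<Longrightarrow> subalgebra M (F k)"
    and nest: "\<And>k. k \<in> {1..n} \<Longrightarrow> sets (F (Suc k)) \<subseteq> sets (F k)"
    and phi_int: "\<And>k. k \<in> {1..n} \<Longrightarrow> integrable M (\<phi> k)"
    and phi_meas: "\<And>k. k \<in> {1..n} \<Longrightarrow> \<phi> k \<in> borel_measurable (F k)"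
begin

abbreviation "E k \<equiv> real_cond_exp M (F k)"
abbreviation "lam \<equiv> cond_lambda M F \<phi>"
definition "h k x = sqrt ((\<phi> k x)\<^sup>2 + (lam (k - 1) x)\<^sup>2)"

lemma sf: "k \<in> {1..Suc n} \<Longrightarrow> sigma_finite_subalgebra M (F k)"
  unfolding sigma_finite_subalgebra_def
  using sub finite_measure_restr_to_subalg prob prob_space.finite_measure finite_measure.sigma_finite_measure
  by blast

lemma nest2: assumes "1 \<le> j" "j \<le> k" "k \<le> Suc n" shows "sets (F k) \<subseteq> sets (F j)"
proof -
  have "k \<le> Suc n \<longrightarrow> sets (F k) \<subseteq> sets (F j)"
    using assms(2)
  proof (induction k rule: dec_induct)
    case (step m)
    then show ?case using nest[of m] assms(1) by auto
  qed simp
  then show ?thesis using assms by simp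
qed

lemma subFF: "1 \<le> j \<Longrightarrow> j \<le> k \<Longrightarrow> k \<le> Suc n \<Longrightarrow> subalgebra (F j) (F k)"
  using nest2[of j k] sub[of j] sub[of k] unfolding subalgebra_def by auto

lemma meas_mono: "g \<in> borel_measurable (F k) \<Longrightarrow> 1 \<le> j \<Longrightarrow> j \<le> k \<Longrightarrow> k \<le> Suc n \<Longrightarrow> g \<in> borel_measurable (F j)"
  using measurable_from_subalg[OF subFF] by blast

lemma meas_M: "g \<in> borel_measurable (F k) \<Longrightarrow> 1 \<le> k \<Longrightarrow> k \<le> Suc n \<Longrightarrow> g \<in> borel_measurable M"
  using measurable_from_subalg[OF sub] by auto

lemma lam_Suc: "1 \<le> k \<Longrightarrow> lam k = E (Suc k) (h k)"
  by (cases k) (auto simp: h_def[abs_def])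

lemma lam_measF: "lam k \<in> borel_measurable (F (Suc k))"
  by (cases k) auto

lemma lam_measM [measurable]: "lam k \<in> borel_measurable M"
  by (cases k) auto

lemma h_nonneg: "h k x \<ge> 0" by (simp add: h_def)

lemma lam_int_h_int: "k \<le> n \<Longrightarrow> integrable M (lam k) \<and> (1 \<le> k \<longrightarrow> integrable M (h k))"
proof (induction k)
  case 0
  then show ?case by simp
next
  case (Suc k)
  have pm: "\<phi> (Suc k) \<in> borel_measurable M" using phi_int[of "Suc k"] Suc by auto
  have "integrable M (\<lambda>x. \<bar>\<phi> (Suc k) x\<bar> + \<bar>lam k x\<bar>)"
    using Suc phi_int[of "Suc k"] by auto
  then have hi: "integrable M (h (Suc k))"
  proof (rule Bochner_Integration.integrable_bound)
    show "h (Suc k) \<in> borel_measurable M" unfolding h_def[abs_def] using pm by measurable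
    show "AE x in M. norm (h (Suc k) x) \<le> norm (\<bar>\<phi> (Suc k) x\<bar> + \<bar>lam k x\<bar>)"
      by (auto simp: h_def sqrt_sum_squares_le_sum_abs)
  qed
  have "integrable M (lam (Suc k))"
    using sigma_finite_subalgebra.real_cond_exp_int(1)[OF sf[of "Suc (Suc k)"] hi] Suc
      lam_Suc[of "Suc k"] by auto
  then show ?case using hi by auto
qed

lemma lam_int: "k \<le> n \<Longrightarrow> integrable M (lam k)" using lam_int_h_int by auto
lemma h_int: "1 \<le> k \<Longrightarrow> k \<le> n \<Longrightarrow> integrable M (h k)" using lam_int_h_int by auto

lemma h_measF: "1 \<le> k \<Longrightarrow> k \<le> n \<Longrightarrow> h k \<in> borel_measurable (F k)"
proof -
  assume k: "1 \<le> k" "k \<le> n"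
  have [measurable]: "\<phi> k \<in> borel_measurable (F k)" using phi_meas k by auto
  have [measurable]: "lam (k - 1) \<in> borel_measurable (F k)" using lam_measF[of "k - 1"] k by simp
  show ?thesis unfolding h_def[abs_def] by measurable
qed

lemma lam_nonneg: "k \<le> n \<Longrightarrow> AE x in M. lam k x \<ge> 0"
proof (cases k)
  case (Suc m)
  assume "k \<le> n"
  then show ?thesis using Suc lam_Suc[of k] h_nonneg h_int[of k]
    sigma_finite_subalgebra.real_cond_exp_pos[OF sf[of "Suc k"], of "h k"] by auto
qed simp


lemma lower:
  assumes adm: "\<forall>k\<in>{1..n}. integrable M (f k) \<and> (AE x in M. E k (f k) x = \<phi> k x)"
  shows "integral\<^sup>L M (lam n) \<le> integral\<^sup>L M (\<lambda>x. sqrt (\<Sum>k\<in>{1..n}. (f k x)\<^sup>2))"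
proof -
  define G where "G m x = sqrt (\<Sum>k\<in>{1..m}. (f k x)\<^sup>2)" for m x
  have fm: "f k \<in> borel_measurable M" if "k \<in> {1..n}" for k using adm that by auto
  have Gm[measurable]: "G m \<in> borel_measurable M" if "m \<le> n" for m
  proof -
    have [measurable]: "(\<lambda>x. \<Sum>k\<in>{1..m}. (f k x)\<^sup>2) \<in> borel_measurable M"
    proof (rule borel_measurable_sum)
      fix k assume "k \<in> {1..m}"
      then have [measurable]: "f k \<in> borel_measurable M" using that fm by auto
      show "(\<lambda>x. (f k x)\<^sup>2) \<in> borel_measurable M" by measurable
    qed
    show ?thesis unfolding G_def[abs_def] by measurable
  qed
  have Gi: "integrable M (G m)" if "m \<le> n" for m
  proof (rule Bochner_Integration.integrable_bound)
    show "integrable M (\<lambda>x. \<Sum>k\<in>{1..m}. \<bar>f k x\<bar>)" proof (rule Bochner_Integration.integrable_sum)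
      fix i assume "i \<in> {1..m}" then show "integrable M (\<lambda>x. \<bar>f i x\<bar>)" using adm that by auto
    qed
    show "G m \<in> borel_measurable M" using that by simp
    show "AE x in M. norm (G m x) \<le> norm (\<Sum>k\<in>{1..m}. \<bar>f k x\<bar>)"
    proof (rule AE_I2)
      fix x
      have "G m x \<le> (\<Sum>k\<in>{1..m}. \<bar>f k x\<bar>)"
        using L2_set_le_sum_abs[of "\<lambda>k. f k x" "{1..m}"] by (simp add: G_def L2_set_def)
      moreover have "G m x \<ge> 0" by (simp add: G_def sum_nonneg)
      ultimately show "norm (G m x) \<le> norm (\<Sum>k\<in>{1..m}. \<bar>f k x\<bar>)" by simp
    qed
  qed
  have GSuc: "G (Suc m) x = sqrt ((f (Suc m) x)\<^sup>2 + (G m x)\<^sup>2)" for m x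
    by (simp add: G_def sum_nonneg add.commute)
  have claim: "m \<le> n \<Longrightarrow> AE x in M. E (Suc m) (G m) x \<ge> lam m x" for m
  proof (induction m)
    case 0
    interpret S: sigma_finite_subalgebra M "F 1" using sf[of 1] by simp
    have "AE x in M. E 1 (\<lambda>x. 0) x = 0"
      by (rule S.real_cond_exp_F_meas) auto
    moreover have "G 0 = (\<lambda>x. 0)" by (auto simp: G_def)
    ultimately show ?case by auto
  next
    case (Suc m)
    let ?k = "Suc m"
    have mn: "m \<le> n" "?k \<in> {1..n}" using Suc by auto
    interpret S: sigma_finite_subalgebra M "F ?k" using sf[of ?k] Suc by simp
    interpret S2: sigma_finite_subalgebra M "F (Suc ?k)" using sf[of "Suc ?k"] Suc by simp
    have fki: "integrable M (f ?k)" and fkE: "AE x in M. E ?k (f ?k) x = \<phi> ?k x"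
      using adm mn by auto
    have [measurable]: "f ?k \<in> borel_measurable M" using fki by auto
    have [measurable]: "G m \<in> borel_measurable M" using mn by simp
    define u where "u = E ?k (f ?k)"
    define v where "v = E ?k (G m)"
    define c where "c x = u x / sqrt ((u x)\<^sup>2 + (v x)\<^sup>2)" for x
    define d where "d x = v x / sqrt ((u x)\<^sup>2 + (v x)\<^sup>2)" for x
    have cm[measurable]: "c \<in> borel_measurable (F ?k)" unfolding c_def[abs_def] u_def v_def by measurable
    have dm[measurable]: "d \<in> borel_measurable (F ?k)" unfolding d_def[abs_def] u_def v_def by measurable
    have cM[measurable]: "c \<in> borel_measurable M" using measurable_from_subalg[OF S.subalg cm] .
    have dM[measurable]: "d \<in> borel_measurable M" using measurable_from_subalg[OF S.subalg dm] .
    have cb: "\<bar>c x\<bar> \<le> 1" for x unfolding c_def by (rule unit_aux(3))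
    have db: "\<bar>d x\<bar> \<le> 1" for x unfolding d_def by (rule unit_aux(4))
    have ci: "integrable M (\<lambda>x. c x * f ?k x)"
      by (rule Bochner_Integration.integrable_bound[OF fki])
        (auto simp: abs_mult intro!: mult_left_le_one_le cb)
    have di: "integrable M (\<lambda>x. d x * G m x)"
      by (rule Bochner_Integration.integrable_bound[OF Gi[OF mn(1)]])
        (auto simp: abs_mult intro!: mult_left_le_one_le db)
    have Gki: "integrable M (G ?k)" using Gi Suc by simp
    have A1: "AE x in M. E ?k (\<lambda>x. c x * f ?k x) x = c x * u x"
      unfolding u_def by (rule S.real_cond_exp_mult) (auto simp: ci)
    have A2: "AE x in M. E ?k (\<lambda>x. d x * G m x) x = d x * v x"
      unfolding v_def by (rule S.real_cond_exp_mult) (auto simp: di)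
    have A3: "AE x in M. E ?k (\<lambda>x. c x * f ?k x + d x * G m x) x
        = E ?k (\<lambda>x. c x * f ?k x) x + E ?k (\<lambda>x. d x * G m x) x"
      by (rule S.real_cond_exp_add[OF ci di])
    have A4: "AE x in M. E ?k (\<lambda>x. c x * f ?k x + d x * G m x) x \<le> E ?k (G ?k) x"
    proof (rule S.real_cond_exp_mono)
      show "AE x in M. c x * f ?k x + d x * G m x \<le> G ?k x"
      proof (rule AE_I2)
        fix x
        have "(c x)\<^sup>2 + (d x)\<^sup>2 \<le> 1" unfolding c_def d_def by (rule unit_aux(1))
        then show "c x * f ?k x + d x * G m x \<le> G ?k x" unfolding GSuc by (rule cs_aux)
      qed
    qed (use ci di Gki in auto)
    have A5: "AE x in M. lam m x \<ge> 0" using lam_nonneg mn by auto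
    have A6: "AE x in M. h ?k x \<le> E ?k (G ?k) x"
      using A1 A2 A3 A4 A5 fkE Suc.IH[OF mn(1)]
    proof eventually_elim
      case (elim x)
      have "h ?k x = sqrt ((u x)\<^sup>2 + (lam m x)\<^sup>2)" using elim by (simp add: h_def u_def)
      also have "\<dots> \<le> sqrt ((u x)\<^sup>2 + (v x)\<^sup>2)"
        using elim by (auto simp: v_def intro!: power_mono)
      also have "\<dots> = c x * u x + d x * v x" unfolding c_def d_def by (rule unit_aux(2)[symmetric])
      also have "\<dots> \<le> E ?k (G ?k) x" using elim by simp
      finally show ?case .
    qed
    have A7: "AE x in M. E (Suc ?k) (E ?k (G ?k)) x = E (Suc ?k) (G ?k) x"
      by (rule S2.real_cond_exp_nested_subalg[OF S.subalg subFF Gki]) (use Suc in auto)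
    have A8: "AE x in M. E (Suc ?k) (h ?k) x \<le> E (Suc ?k) (E ?k (G ?k)) x"
      by (rule S2.real_cond_exp_mono[OF A6 h_int S.real_cond_exp_int(1)[OF Gki]]) (use Suc in auto)
    show ?case using A7 A8 lam_Suc[of ?k] by auto
  qed
  interpret S3: sigma_finite_subalgebra M "F (Suc n)" using sf[of "Suc n"] by simp
  have "integral\<^sup>L M (lam n) \<le> integral\<^sup>L M (E (Suc n) (G n))"
    using claim[of n] lam_int[of n] S3.real_cond_exp_int(1)[OF Gi[of n]]
    by (intro integral_mono_AE) auto
  also have "\<dots> = integral\<^sup>L M (G n)" using S3.real_cond_exp_int(2)[OF Gi[of n]] by simp
  finally show ?thesis unfolding G_def .
qed


definition "r j x = (if lam j x \<le> 0 then 1 else h j x / lam j x)"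
definition "rho k x = (\<Prod>j\<in>{1..<k}. r j x)"

lemma r_nonneg: "r j x \<ge> 0" by (simp add: r_def h_nonneg)
lemma rho_nonneg: "rho k x \<ge> 0" by (simp add: rho_def r_nonneg prod_nonneg)

lemma h_measM: "1 \<le> k \<Longrightarrow> k \<le> n \<Longrightarrow> h k \<in> borel_measurable M"
  using meas_M[OF h_measF] by auto

lemma r_meas: "1 \<le> j \<Longrightarrow> j \<le> n \<Longrightarrow> r j \<in> borel_measurable (F j)"
proof -
  assume j: "1 \<le> j" "j \<le> n"
  have [measurable]: "h j \<in> borel_measurable (F j)" using h_measF j by auto
  have [measurable]: "lam j \<in> borel_measurable (F j)" using meas_mono[OF lam_measF, of j j] j by auto
  show ?thesis unfolding r_def[abs_def] by measurable
qed

lemma ratio_step: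
  assumes j: "1 \<le> j" "j < n" and gm[measurable]: "g \<in> borel_measurable (F (Suc j))" and gi: "integrable M g"
  shows "integrable M (\<lambda>x. g x * r j x) \<and> (AE x in M. E (Suc j) (\<lambda>x. g x * r j x) x = g x)"
proof -
  interpret S: sigma_finite_subalgebra M "F (Suc j)" using sf[of "Suc j"] j by simp
  have [measurable]: "lam j \<in> borel_measurable (F (Suc j))" by (rule lam_measF)
  have HM[measurable]: "h j \<in> borel_measurable M" using h_measM j by auto
  have Hi: "integrable M (h j)" using h_int j by auto
  have EH: "E (Suc j) (h j) = lam j" using lam_Suc j by simp
  have gM[measurable]: "g \<in> borel_measurable M" using gi by auto
  define q where "q x = (if lam j x \<le> 0 then 0 else g x / lam j x)" for x
  define ind where "ind x = (if lam j x \<le> 0 then g x else 0)" for x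
  have qm[measurable]: "q \<in> borel_measurable (F (Suc j))" unfolding q_def[abs_def] by measurable
  have indm[measurable]: "ind \<in> borel_measurable (F (Suc j))" unfolding ind_def[abs_def] by measurable
  have qM[measurable]: "q \<in> borel_measurable M" using measurable_from_subalg[OF S.subalg qm] .
  have indM[measurable]: "ind \<in> borel_measurable M" using measurable_from_subalg[OF S.subalg indm] .

  have indi: "integrable M ind"
    by (rule Bochner_Integration.integrable_bound[OF gi]) (auto simp: ind_def)
  have pw1: "norm (\<bar>q x\<bar> * lam j x) \<le> norm (g x)" for x
  proof (cases "lam j x \<le> 0")
    case True then show ?thesis by (simp add: q_def)
  next
    case False then show ?thesis by (simp add: q_def abs_mult abs_divide)
  qed
  have pw2: "ind x + q x * lam j x = g x" for x
  proof (cases "lam j x \<le> 0")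
    case True then show ?thesis by (simp add: q_def ind_def)
  next
    case False then show ?thesis by (simp add: q_def ind_def)
  qed
  have pw3: "g x * r j x = ind x + q x * h j x" for x
  proof (cases "lam j x \<le> 0")
    case True then show ?thesis by (simp add: q_def ind_def r_def)
  next
    case False then show ?thesis by (simp add: q_def ind_def r_def)
  qed
  have eq: "(\<lambda>x. g x * r j x) = (\<lambda>x. ind x + q x * h j x)"
    using pw3 by (intro ext) simp
  have X: "integrable M (\<lambda>x. \<bar>q x\<bar> * E (Suc j) (h j) x)"
    unfolding EH
    proof (rule Bochner_Integration.integrable_bound[OF gi])
    show "AE x in M. norm (\<bar>q x\<bar> * lam j x) \<le> norm (g x)" by (rule AE_I2[OF pw1])
  qed measurable
  have "integrable M (\<lambda>x. \<bar>q x\<bar> * h j x)"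
  proof (rule S.integrable_from_cond_exp_nonneg[OF Hi h_nonneg _ _ X])
    show "(\<lambda>x. \<bar>q x\<bar>) \<in> borel_measurable (F (Suc j))" by measurable
  qed simp
  then have qHi: "integrable M (\<lambda>x. q x * h j x)"
    by (rule Bochner_Integration.integrable_bound) (simp_all add: abs_mult h_nonneg)
  have A1: "AE x in M. E (Suc j) (\<lambda>x. ind x + q x * h j x) x = E (Suc j) ind x + E (Suc j) (\<lambda>x. q x * h j x) x"
    by (rule S.real_cond_exp_add[OF indi qHi])
  have A2: "AE x in M. E (Suc j) ind x = ind x"
    by (rule S.real_cond_exp_F_meas[OF indi indm])
  have A3: "AE x in M. E (Suc j) (\<lambda>x. q x * h j x) x = q x * E (Suc j) (h j) x"
    by (rule S.real_cond_exp_mult[OF qm HM qHi])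
  have "AE x in M. E (Suc j) (\<lambda>x. g x * r j x) x = g x"
    unfolding eq using A1 A2 A3 by eventually_elim (simp add: EH pw2)
  then show ?thesis unfolding eq using indi qHi by auto
qed


lemma rho_Suc: "1 \<le> m \<Longrightarrow> rho (Suc m) x = rho m x * r m x"
  by (simp add: rho_def prod.atLeastLessThan_Suc)

lemma rho_1: "rho (Suc 0) x = 1" by (simp add: rho_def)

lemma Qk:
  assumes "1 \<le> k"
  shows "k \<le> n \<longrightarrow> (\<forall>g. g \<in> borel_measurable (F k) \<longrightarrow> integrable M g \<longrightarrow>
     integrable M (\<lambda>x. g x * rho k x) \<and> (AE x in M. E k (\<lambda>x. g x * rho k x) x = g x))"
  using assms
proof (induction k rule: dec_induct)
  case base
  interpret S: sigma_finite_subalgebra M "F 1" using sf[of 1] by simp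
  show ?case
  proof (intro impI allI)
    fix g :: "'a \<Rightarrow> real" assume "1 \<le> n" and gm: "g \<in> borel_measurable (F 1)" and gi: "integrable M g"
    show "integrable M (\<lambda>x. g x * rho 1 x) \<and> (AE x in M. E 1 (\<lambda>x. g x * rho 1 x) x = g x)"
      using S.real_cond_exp_F_meas[OF gi gm] gi by (simp add: rho_1)
  qed
next
  case (step m)
  show ?case
  proof (intro impI allI)
    fix g :: "'a \<Rightarrow> real" assume mn: "Suc m \<le> n" and gm[measurable]: "g \<in> borel_measurable (F (Suc m))" and gi: "integrable M g"
    interpret S: sigma_finite_subalgebra M "F (Suc m)" using sf[of "Suc m"] mn by simp
    define w where "w x = g x * r m x" for x
    have RS: "integrable M w \<and> (AE x in M. E (Suc m) w x = g x)"
      using ratio_step[of m g] step mn gm gi unfolding w_def[abs_def] by auto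
    have [measurable]: "g \<in> borel_measurable (F m)" using meas_mono[OF gm, of m] step mn by auto
    have [measurable]: "r m \<in> borel_measurable (F m)" using r_meas[of m] step mn by auto
    have wm: "w \<in> borel_measurable (F m)" unfolding w_def[abs_def] by measurable
    have IH: "integrable M (\<lambda>x. w x * rho m x) \<and> (AE x in M. E m (\<lambda>x. w x * rho m x) x = w x)"
      using step.IH mn wm RS by auto
    have eq: "(\<lambda>x. g x * rho (Suc m) x) = (\<lambda>x. w x * rho m x)"
      using step by (auto simp: rho_Suc w_def intro!: ext)
    have wM[measurable]: "w \<in> borel_measurable M" using RS by auto
    have A1: "AE x in M. E (Suc m) (E m (\<lambda>x. w x * rho m x)) x = E (Suc m) (\<lambda>x. w x * rho m x) x"
      by (rule S.real_cond_exp_nested_subalg[OF sub subFF]) (use step mn IH in auto)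
    have A2: "AE x in M. E (Suc m) (E m (\<lambda>x. w x * rho m x)) x = E (Suc m) w x"
      by (rule S.real_cond_exp_cong) (use IH in auto)
    show "integrable M (\<lambda>x. g x * rho (Suc m) x) \<and> (AE x in M. E (Suc m) (\<lambda>x. g x * rho (Suc m) x) x = g x)"
      unfolding eq using IH A1 A2 RS by auto
  qed
qed

lemma r_lam:
  assumes j: "1 \<le> j" "j \<le> n"
  shows "AE x in M. r j x * lam j x = h j x"
proof -
  interpret S: sigma_finite_subalgebra M "F (Suc j)" using sf[of "Suc j"] j by simp
  have [measurable]: "lam j \<in> borel_measurable (F (Suc j))" by (rule lam_measF)
  have HM[measurable]: "h j \<in> borel_measurable M" using h_measM j by auto
  have Hi: "integrable M (h j)" using h_int j by auto
  have EH: "E (Suc j) (h j) = lam j" using lam_Suc j by simp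
  define A where "A = {x\<in>space M. lam j x \<le> 0}"
  have "{x\<in>space (F (Suc j)). lam j x \<le> 0} \<in> sets (F (Suc j))" by measurable
  moreover have "space (F (Suc j)) = space M" using S.subalg unfolding subalgebra_def by auto
  ultimately have AF: "A \<in> sets (F (Suc j))" unfolding A_def by simp
  have AM: "A \<in> sets M" using AF S.subalg unfolding subalgebra_def by auto
  have "(\<integral>x\<in>A. h j x \<partial>M) = (\<integral>x\<in>A. E (Suc j) (h j) x \<partial>M)"
    by (rule S.real_cond_exp_intA[OF Hi AF])
  then have e1: "(\<integral>x. h j x * indicator A x \<partial>M) = (\<integral>x. lam j x * indicator A x \<partial>M)"
    unfolding EH set_lebesgue_integral_def by (simp add: mult.commute)
  have "0 \<le> (\<integral>x. - (lam j x * indicator A x) \<partial>M)"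
    by (rule integral_nonneg_AE) (auto simp: A_def indicator_def intro!: AE_I2)
  then have "(\<integral>x. h j x * indicator A x \<partial>M) \<le> 0" using e1 by simp
  moreover have "0 \<le> (\<integral>x. h j x * indicator A x \<partial>M)"
    by (rule integral_nonneg_AE) (auto simp: h_nonneg intro!: AE_I2)
  ultimately have "(\<integral>x. h j x * indicator A x \<partial>M) = 0" by linarith
  then have Z: "AE x in M. h j x * indicator A x = 0"
    using integral_nonneg_eq_0_iff_AE[OF integrable_real_mult_indicator[OF AM Hi]]
    by (simp add: h_nonneg)
  show ?thesis using Z lam_nonneg[OF j(2)] AE_space
  proof eventually_elim
    case (elim x)
    show ?case
    proof (cases "lam j x \<le> 0")
      case True
      then have "x \<in> A" using elim by (auto simp: A_def)
      then show ?thesis using elim True by (simp add: r_def)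
    next
      case False then show ?thesis by (simp add: r_def)
    qed
  qed
qed

lemma h1_sq: "(h (Suc 0) x)\<^sup>2 = (\<phi> 1 x)\<^sup>2" by (simp add: h_def)
lemma hSuc_sq: "(h (Suc m) x)\<^sup>2 = (\<phi> (Suc m) x)\<^sup>2 + (lam m x)\<^sup>2" by (simp add: h_def)

lemma sum_id:
  assumes hyp: "\<forall>j\<in>{1..<n}. r j x * lam j x = h j x" and m: "1 \<le> m"
  shows "m \<le> n \<longrightarrow> (\<Sum>k\<in>{1..m}. (\<phi> k x * rho k x)\<^sup>2) = (rho m x * h m x)\<^sup>2"
  using m
proof (induction m rule: dec_induct)
  case base
  then show ?case by (simp add: rho_1 h1_sq)
next
  case (step m)
  show ?case
  proof
    assume mn: "Suc m \<le> n"
    have hm: "h m x = r m x * lam m x" using hyp step mn by auto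
    have "(\<Sum>k\<in>{1..Suc m}. (\<phi> k x * rho k x)\<^sup>2) = (rho m x * h m x)\<^sup>2 + (\<phi> (Suc m) x * rho (Suc m) x)\<^sup>2"
      using step mn by (simp add: sum.cl_ivl_Suc)
    also have "\<dots> = (rho (Suc m) x * h (Suc m) x)\<^sup>2"
      unfolding power_mult_distrib hSuc_sq rho_Suc[OF step(1)] hm by (simp add: algebra_simps)
    finally show "(\<Sum>k\<in>{1..Suc m}. (\<phi> k x * rho k x)\<^sup>2) = (rho (Suc m) x * h (Suc m) x)\<^sup>2" .
  qed
qed


lemma upper:
  assumes n1: "1 \<le> n"
  shows "\<exists>f. (\<forall>k\<in>{1..n}. integrable M (f k) \<and> (AE x in M. E k (f k) x = \<phi> k x)) \<and>
     integral\<^sup>L M (\<lambda>x. sqrt (\<Sum>k\<in>{1..n}. (f k x)\<^sup>2)) = integral\<^sup>L M (lam n)"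
proof (intro exI conjI)
  define f where "f k x = \<phi> k x * rho k x" for k x
  show adm: "\<forall>k\<in>{1..n}. integrable M (f k) \<and> (AE x in M. E k (f k) x = \<phi> k x)"
  proof
    fix k assume k: "k \<in> {1..n}"
    show "integrable M (f k) \<and> (AE x in M. E k (f k) x = \<phi> k x)"
    proof -
      have k1: "1 \<le> k" "k \<le> n" using k by auto
      have "integrable M (\<lambda>x. \<phi> k x * rho k x) \<and> (AE x in M. E k (\<lambda>x. \<phi> k x * rho k x) x = \<phi> k x)"
        using Qk[OF k1(1)] k1(2) phi_meas[OF k] phi_int[OF k] by blast
      then show ?thesis unfolding f_def[abs_def] .
    qed
  qed
  interpret S: sigma_finite_subalgebra M "F n" using sf[of n] n1 by simp
  interpret S2: sigma_finite_subalgebra M "F (Suc n)" using sf[of "Suc n"] by simp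
  have Q: "integrable M (\<lambda>x. h n x * rho n x) \<and> (AE x in M. E n (\<lambda>x. h n x * rho n x) x = h n x)"
    using Qk[OF n1] h_measF[OF n1 order.refl] h_int[OF n1 order.refl] by blast
  have "AE x in M. \<forall>j\<in>{1..<n}. r j x * lam j x = h j x"
  proof (rule AE_finite_allI)
    fix j assume "j \<in> {1..<n}"
    then show "AE x in M. r j x * lam j x = h j x" by (intro r_lam) auto
  qed simp
  then have A1: "AE x in M. sqrt (\<Sum>k\<in>{1..n}. (f k x)\<^sup>2) = h n x * rho n x"
  proof eventually_elim
    case (elim x)
    have "(\<Sum>k\<in>{1..n}. (f k x)\<^sup>2) = (rho n x * h n x)\<^sup>2"
      using sum_id[OF elim n1] unfolding f_def by simp
    then show ?case using rho_nonneg[of n x] h_nonneg[of n x] by (simp add: mult.commute)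
  qed
  have fM: "f k \<in> borel_measurable M" if "k \<in> {1..n}" for k using adm that borel_measurable_integrable by blast
  have sumM: "(\<lambda>x. \<Sum>k\<in>{1..n}. (f k x)\<^sup>2) \<in> borel_measurable M"
  proof (rule borel_measurable_sum)
    fix k assume "k \<in> {1..n}"
    then have [measurable]: "f k \<in> borel_measurable M" using fM by auto
    show "(\<lambda>x. (f k x)\<^sup>2) \<in> borel_measurable M" by measurable
  qed
  have "integral\<^sup>L M (\<lambda>x. sqrt (\<Sum>k\<in>{1..n}. (f k x)\<^sup>2)) = integral\<^sup>L M (\<lambda>x. h n x * rho n x)"
    proof (rule integral_cong_AE[OF _ _ A1])
    show "(\<lambda>x. h n x * rho n x) \<in> borel_measurable M" by (rule borel_measurable_integrable[OF conjunct1[OF Q]])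
    show "(\<lambda>x. sqrt (\<Sum>k\<in>{1..n}. (f k x)\<^sup>2)) \<in> borel_measurable M"
      by (rule measurable_compose[OF sumM borel_measurable_sqrt])
  qed
  also have "\<dots> = integral\<^sup>L M (E n (\<lambda>x. h n x * rho n x))"
    using S.real_cond_exp_int(2)[OF conjunct1[OF Q]] by (rule sym)
  also have "\<dots> = integral\<^sup>L M (h n)"
    by (rule integral_cong_AE[OF borel_measurable_cond_exp2 h_measM[OF n1 order.refl] conjunct2[OF Q]])
  also have "\<dots> = integral\<^sup>L M (E (Suc n) (h n))"
    using S2.real_cond_exp_int(2)[OF h_int[OF n1 order.refl]] by (rule sym)
  also have "\<dots> = integral\<^sup>L M (lam n)" by (simp only: lam_Suc[OF n1])
  finally show "integral\<^sup>L M (\<lambda>x. sqrt (\<Sum>k\<in>{1..n}. (f k x)\<^sup>2)) = integral\<^sup>L M (lam n)" .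
qed

lemma main:
  "Inf {integral\<^sup>L M (\<lambda>x. sqrt (\<Sum>k\<in>{1..n}. (f k x)\<^sup>2)) | f.
              \<forall>k\<in>{1..n}. integrable M (f k) \<and>
                (AE x in M. real_cond_exp M (F k) (f k) x = \<phi> k x)}
         = integral\<^sup>L M (cond_lambda M F \<phi> n)"
proof (rule cInf_eq_minimum)
  show "integral\<^sup>L M (cond_lambda M F \<phi> n) \<in> {integral\<^sup>L M (\<lambda>x. sqrt (\<Sum>k\<in>{1..n}. (f k x)\<^sup>2)) | f.
              \<forall>k\<in>{1..n}. integrable M (f k) \<and>
                (AE x in M. real_cond_exp M (F k) (f k) x = \<phi> k x)}"
  proof (cases "n = 0")
    case True
    have A: "integral\<^sup>L M (cond_lambda M F \<phi> n) = integral\<^sup>L M (\<lambda>x. sqrt (\<Sum>k\<in>{1..n}. ((\<lambda>k x. 0::real) k x)\<^sup>2))"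
      using True by simp
    have B: "\<forall>k\<in>{1..n}. integrable M ((\<lambda>k x. 0::real) k) \<and>
                (AE x in M. real_cond_exp M (F k) ((\<lambda>k x. 0::real) k) x = \<phi> k x)" using True by simp
    show ?thesis by (rule CollectI, rule exI[of _ "\<lambda>k x. 0::real"], rule conjI[OF A B])
  next
    case False
    then have n1: "1 \<le> n" by simp
    obtain f where fP: "\<forall>k\<in>{1..n}. integrable M (f k) \<and> (AE x in M. E k (f k) x = \<phi> k x)"
      and fv: "integral\<^sup>L M (\<lambda>x. sqrt (\<Sum>k\<in>{1..n}. (f k x)\<^sup>2)) = integral\<^sup>L M (lam n)"
      using upper[OF n1] by blast
    show ?thesis by (rule CollectI, rule exI[of _ f]) (use fP fv in simp)
  qed
next
  fix y assume "y \<in> {integral\<^sup>L M (\<lambda>x. sqrt (\<Sum>k\<in>{1..n}. (f k x)\<^sup>2)) | f.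
              \<forall>k\<in>{1..n}. integrable M (f k) \<and>
                (AE x in M. real_cond_exp M (F k) (f k) x = \<phi> k x)}"
  then obtain f where "y = integral\<^sup>L M (\<lambda>x. sqrt (\<Sum>k\<in>{1..n}. (f k x)\<^sup>2))"
    "\<forall>k\<in>{1..n}. integrable M (f k) \<and> (AE x in M. real_cond_exp M (F k) (f k) x = \<phi> k x)"
    by blast
  then show "integral\<^sup>L M (cond_lambda M F \<phi> n) \<le> y" using lower[of f] by simp
qed

end

theorem lemma1p3:
  fixes M :: "'a measure" and F :: "nat \<Rightarrow> 'a measure"
    and \<phi> :: "nat \<Rightarrow> 'a \<Rightarrow> real" and n :: nat
  assumes "prob_space M"
    and "\<And>k. k \<in> {1..Suc n} \<Longrightarrow> subalgebra M (F k)"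
    and "\<And>k. k \<in> {1..n} \<Longrightarrow> sets (F (Suc k)) \<subseteq> sets (F k)"
    and "\<And>k. k \<in> {1..n} \<Longrightarrow> integrable M (\<phi> k)"
    and "\<And>k. k \<in> {1..n} \<Longrightarrow> \<phi> k \<in> borel_measurable (F k)"
  shows "Inf {integral\<^sup>L M (\<lambda>x. sqrt (\<Sum>k\<in>{1..n}. (f k x)\<^sup>2)) | f.
              \<forall>k\<in>{1..n}. integrable M (f k) \<and>
                (AE x in M. real_cond_exp M (F k) (f k) x = \<phi> k x)}
         = integral\<^sup>L M (cond_lambda M F \<phi> n)"
proof -
  interpret L13 M F \<phi> n by (rule L13.intro[of M n F \<phi>, OF assms])
  show ?thesis by (rule main)
qed

end
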